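(* Let $\alpha$ be an algebraic number of degree $3$ with conjugates $\alpha_1 = \alpha, \alpha_2, \alpha_3$. For a prime $q$, fix $q$-th roots $\alpha_1^{1/q},\alpha_2^{1/q},\alpha_3^{1/q}$ and a primitive $q$-th root of unity $\zeta_q$, let $K_q = \mathbb{Q}(\zeta_q, \alpha_1^{1/q}, \alpha_2^{1/q}, \alpha_3^{1/q})$, and let $C$ be the set of $\sigma \in \textup{Gal}(K_q/\mathbb{Q})$ such that: $\sigma(\zeta_q) = \zeta_q^{-1}$; there exist distinct $i,j \in \{1,2,3\}$ with $\sigma(\alpha_i) = \alpha_j$ and $\sigma(\alpha_j) = \alpha_i$; and for these $i,j$, $\sigma(\sigma(\alpha_i^{1/q})) = \alpha_i^{1/q}$ and $\sigma(\sigma(\alpha_j^{1/q})) = \alpha_j^{1/q}$. Then $|C| \ll q^2$. If moreover $|N(\alpha)| = 1$, then $|C| \ll q$.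
   Context: $N(\alpha)$ denotes the norm of $\alpha$ over $\mathbb{Q}$. The implied constants may depend on $\alpha$ but not on $q$. *)

theory Defs
  imports Complex_Main "HOL-Computational_Algebra.Polynomial"
    "HOL-Computational_Algebra.Polynomial_Factorial"
begin

text \<open>The subfield of the complex numbers generated by a set S
  (it automatically contains the rationals).\<close>
definition gen_subfield :: "complex set \<Rightarrow> complex set" where
  "gen_subfield S = \<Inter>{F. S \<subseteq> F \<and> 0 \<in> F \<and> 1 \<in> F \<and>
      (\<forall>x\<in>F. \<forall>y\<in>F. x + y \<in> F \<and> x * y \<in> F) \<and>
      (\<forall>x\<in>F. - x \<in> F \<and> inverse x \<in> F)}"

text \<open>Field automorphisms of a subfield K of the complex numbers (these fix the
  rationals automatically), normalised to be the identity outside K so that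
  each automorphism has a unique representative. For K normal over the rationals
  this is the Galois group Gal(K/Q).\<close>
definition field_auts :: "complex set \<Rightarrow> (complex \<Rightarrow> complex) set" where
  "field_auts K = {\<sigma>. bij_betw \<sigma> K K \<and>
      (\<forall>x\<in>K. \<forall>y\<in>K. \<sigma> (x + y) = \<sigma> x + \<sigma> y \<and> \<sigma> (x * y) = \<sigma> x * \<sigma> y) \<and>
      \<sigma> 1 = 1 \<and> (\<forall>x. x \<notin> K \<longrightarrow> \<sigma> x = x)}"

text \<open>K_q = Q(zeta, b 1, b 2, b 3) where b i is the chosen q-th root of a i.\<close>
definition Kq :: "complex \<Rightarrow> (nat \<Rightarrow> complex) \<Rightarrow> complex set" where
  "Kq \<zeta> b = gen_subfield {\<zeta>, b 1, b 2, b 3}"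

definition setC :: "complex \<Rightarrow> (nat \<Rightarrow> complex) \<Rightarrow> (nat \<Rightarrow> complex) \<Rightarrow> (complex \<Rightarrow> complex) set" where
  "setC \<zeta> a b = {\<sigma> \<in> field_auts (Kq \<zeta> b). \<sigma> \<zeta> = inverse \<zeta> \<and>
      (\<exists>i\<in>{1,2,3}. \<exists>j\<in>{1,2,3}. i \<noteq> j \<and> \<sigma> (a i) = a j \<and> \<sigma> (a j) = a i \<and>
         \<sigma> (\<sigma> (b i)) = b i \<and> \<sigma> (\<sigma> (b j)) = b j)}"

end

theory Submission
  imports Defs
begin

definition fieldlike :: "complex set \<Rightarrow> bool" where
  "fieldlike F \<longleftrightarrow> 0 \<in> F \<and> 1 \<in> F \<and> (\<forall>x\<in>F. \<forall>y\<in>F. x + y \<in> F \<and> x * y \<in> F) \<and>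
      (\<forall>x\<in>F. - x \<in> F \<and> inverse x \<in> F)"

lemma gs_sub: "S \<subseteq> gen_subfield S"
  unfolding gen_subfield_def by auto

lemma gs_fieldlike: "fieldlike (gen_subfield S)"
  unfolding fieldlike_def gen_subfield_def by auto

lemma gs_least: "S \<subseteq> F \<Longrightarrow> fieldlike F \<Longrightarrow> gen_subfield S \<subseteq> F"
  unfolding fieldlike_def gen_subfield_def by blast

lemma roots_finite_card: "0 < n \<Longrightarrow> finite {z::complex. z ^ n = c} \<and> card {z::complex. z ^ n = c} \<le> n"
proof (cases "c = 0")
  case True
  assume n: "0 < n"
  with True have "{z::complex. z ^ n = c} = {0}" by auto
  thus ?thesis using n by simp
next
  case False
  assume "0 < n" thus ?thesis using False card_nth_roots by auto
qed

locale autK =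
  fixes K :: "complex set" and \<sigma> :: "complex \<Rightarrow> complex"
  assumes fl: "fieldlike K" and aut: "\<sigma> \<in> field_auts K"
begin

lemma K0: "0 \<in> K" and K1: "1 \<in> K" and Kadd: "x \<in> K \<Longrightarrow> y \<in> K \<Longrightarrow> x + y \<in> K"
  and Kmult: "x \<in> K \<Longrightarrow> y \<in> K \<Longrightarrow> x * y \<in> K"
  and Kneg: "x \<in> K \<Longrightarrow> - x \<in> K" and Kinv: "x \<in> K \<Longrightarrow> inverse x \<in> K"
  using fl unfolding fieldlike_def by auto

lemma Kdiff: "x \<in> K \<Longrightarrow> y \<in> K \<Longrightarrow> x - y \<in> K"
  using Kadd Kneg[of y] by (metis diff_conv_add_uminus)

lemma Kdiv: "x \<in> K \<Longrightarrow> y \<in> K \<Longrightarrow> x / y \<in> K"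
  using Kmult Kinv[of y] by (metis divide_inverse)

lemma Kpow: "x \<in> K \<Longrightarrow> x ^ n \<in> K"
  by (induction n) (auto intro: K1 Kmult)

lemma sadd: "x \<in> K \<Longrightarrow> y \<in> K \<Longrightarrow> \<sigma> (x + y) = \<sigma> x + \<sigma> y"
  and smult: "x \<in> K \<Longrightarrow> y \<in> K \<Longrightarrow> \<sigma> (x * y) = \<sigma> x * \<sigma> y"
  and s1: "\<sigma> 1 = 1" and sbij: "bij_betw \<sigma> K K"
  using aut unfolding field_auts_def by auto

lemma sK: "x \<in> K \<Longrightarrow> \<sigma> x \<in> K"
  using sbij by (auto simp: bij_betw_def)

lemma s0: "\<sigma> 0 = 0"
  using sadd[OF K0 K0] by simp

lemma sneg: "x \<in> K \<Longrightarrow> \<sigma> (- x) = - \<sigma> x"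
  using sadd[of x "-x"] Kneg[of x] s0 by (simp add: add_eq_0_iff)

lemma sdiff: "x \<in> K \<Longrightarrow> y \<in> K \<Longrightarrow> \<sigma> (x - y) = \<sigma> x - \<sigma> y"
  using sadd[of x "-y"] Kneg[of y] sneg[of y] by (metis diff_conv_add_uminus)

lemma sinv: "x \<in> K \<Longrightarrow> \<sigma> (inverse x) = inverse (\<sigma> x)"
proof (cases "x = 0")
  case True thus ?thesis by (simp add: s0)
next
  case False
  assume x: "x \<in> K"
  have "\<sigma> x * \<sigma> (inverse x) = 1" using smult[OF x Kinv[OF x]] False s1 by simp
  thus ?thesis by (simp add: inverse_unique)
qed

lemma sdiv: "x \<in> K \<Longrightarrow> y \<in> K \<Longrightarrow> \<sigma> (x / y) = \<sigma> x / \<sigma> y"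
  using smult[of x "inverse y"] Kinv[of y] sinv[of y] by (metis divide_inverse)

lemma spow: "x \<in> K \<Longrightarrow> \<sigma> (x ^ n) = \<sigma> x ^ n"
  by (induction n) (auto simp: s1 smult Kpow)

lemma snz: "x \<in> K \<Longrightarrow> x \<noteq> 0 \<Longrightarrow> \<sigma> x \<noteq> 0"
  using sbij K0 s0 unfolding bij_betw_def inj_on_def by metis

lemma snat: "of_nat n \<in> K \<and> \<sigma> (of_nat n) = of_nat n"
proof (induction n)
  case 0 thus ?case using K0 s0 by simp
next
  case (Suc n)
  hence h: "of_nat n \<in> K" "\<sigma> (of_nat n) = of_nat n" by auto
  have e: "of_nat (Suc n) = 1 + (of_nat n::complex)" by simp
  show ?case unfolding e using Kadd[OF K1 h(1)] sadd[OF K1 h(1)] s1 h(2) by simp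
qed

lemma sint: "of_int z \<in> K \<and> \<sigma> (of_int z) = of_int z"
proof (cases "z \<ge> 0")
  case True
  hence "z = int (nat z)" by simp
  hence e: "(of_int z :: complex) = of_nat (nat z)" by (metis of_int_of_nat_eq)
  show ?thesis unfolding e using snat by blast
next
  case False
  hence "z = - int (nat (- z))" by simp
  hence e: "(of_int z :: complex) = - of_nat (nat (- z))" by (metis of_int_minus of_int_of_nat_eq)
  have h: "of_nat (nat (- z)) \<in> K" "\<sigma> (of_nat (nat (- z))) = of_nat (nat (- z))" using snat by auto
  show ?thesis unfolding e using Kneg[OF h(1)] sneg[OF h(1)] h(2) by simp
qed

lemma srat: "of_rat r \<in> K \<and> \<sigma> (of_rat r) = of_rat r"
proof -
  obtain a b where r: "r = of_int a / of_int b" by (metis Fract_of_int_quotient Rat_cases)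
  have "of_rat r = (of_int a / of_int b :: complex)" by (simp add: r of_rat_divide)
  thus ?thesis using sint[of a] sint[of b] Kdiv sdiv by simp
qed

end

lemma aut_determined:
  assumes "\<sigma> \<in> field_auts (gen_subfield S)" "\<tau> \<in> field_auts (gen_subfield S)"
    and "\<forall>s\<in>S. \<sigma> s = \<tau> s"
  shows "\<sigma> = \<tau>"
proof
  fix x
  interpret s: autK "gen_subfield S" \<sigma> using assms(1) gs_fieldlike by unfold_locales
  interpret t: autK "gen_subfield S" \<tau> using assms(2) gs_fieldlike by unfold_locales
  define E where "E = {x \<in> gen_subfield S. \<sigma> x = \<tau> x}"
  have "fieldlike E" unfolding fieldlike_def
  proof (intro conjI ballI)
    show "0 \<in> E" unfolding E_def using s.K0 s.s0 t.s0 by simp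
    show "1 \<in> E" unfolding E_def using s.K1 s.s1 t.s1 by simp
  next
    fix x y assume x: "x \<in> E" and y: "y \<in> E"
    hence xK: "x \<in> gen_subfield S" and yK: "y \<in> gen_subfield S" and
      xe: "\<sigma> x = \<tau> x" and ye: "\<sigma> y = \<tau> y" unfolding E_def by auto
    show "x + y \<in> E" unfolding E_def using s.Kadd[OF xK yK] s.sadd[OF xK yK] t.sadd[OF xK yK] xe ye by simp
    show "x * y \<in> E" unfolding E_def using s.Kmult[OF xK yK] s.smult[OF xK yK] t.smult[OF xK yK] xe ye by simp
  next
    fix x assume x: "x \<in> E"
    hence xK: "x \<in> gen_subfield S" and xe: "\<sigma> x = \<tau> x" unfolding E_def by auto
    show "- x \<in> E" unfolding E_def using s.Kneg[OF xK] s.sneg[OF xK] t.sneg[OF xK] xe by simp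
    show "inverse x \<in> E" unfolding E_def using s.Kinv[OF xK] s.sinv[OF xK] t.sinv[OF xK] xe by simp
  qed
  moreover have "S \<subseteq> E" using assms(3) gs_sub unfolding E_def by auto
  ultimately have sub: "gen_subfield S \<subseteq> E" using gs_least by blast
  show "\<sigma> x = \<tau> x"
  proof (cases "x \<in> gen_subfield S")
    case True thus ?thesis using sub E_def by auto
  next
    case False thus ?thesis using assms(1,2) unfolding field_auts_def by auto
  qed
qed


lemma prim_aux:
  assumes q: "0 < q" and z: "\<zeta> ^ q = (1::complex)" and prim: "\<forall>k. 0 < k \<and> k < q \<longrightarrow> \<zeta> ^ k \<noteq> 1"
    and mn: "m < n" "n < q"
  shows "\<zeta> ^ m \<noteq> \<zeta> ^ n"
proof
  assume eq: "\<zeta> ^ m = \<zeta> ^ n"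
  have z0: "\<zeta> \<noteq> 0"
  proof
    assume "\<zeta> = 0" with z q show False by (simp add: zero_power)
  qed
  have "\<zeta> ^ n = \<zeta> ^ m * \<zeta> ^ (n - m)" using mn by (metis le_add_diff_inverse less_imp_le power_add)
  hence "\<zeta> ^ m * \<zeta> ^ (n - m) = \<zeta> ^ m * 1" using eq by simp
  hence "\<zeta> ^ (n - m) = 1" using z0 by (metis mult_left_cancel power_not_zero)
  thus False using prim mn by auto
qed

lemma prim_powers:
  assumes q: "0 < q" and z: "\<zeta> ^ q = 1" and prim: "\<forall>k. 0 < k \<and> k < q \<longrightarrow> \<zeta> ^ k \<noteq> 1"
    and u: "(u::complex) ^ q = 1"
  shows "\<exists>m. u = \<zeta> ^ m"
proof -
  have inj: "inj_on (\<lambda>m. \<zeta> ^ m) {..<q}"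
  proof (rule inj_onI)
    fix m n assume mn: "m \<in> {..<q}" "n \<in> {..<q}" "\<zeta> ^ m = \<zeta> ^ n"
    show "m = n"
    proof (rule ccontr)
      assume "m \<noteq> n"
      then consider "m < n" | "n < m" by linarith
      thus False
      proof cases
        case 1 thus False using prim_aux[OF q z prim 1] mn by auto
      next
        case 2 thus False using prim_aux[OF q z prim 2] mn by auto
      qed
    qed
  qed
  have sub: "(\<lambda>m. \<zeta> ^ m) ` {..<q} \<subseteq> {z. z ^ q = 1}"
  proof
    fix x assume "x \<in> (\<lambda>m. \<zeta> ^ m) ` {..<q}"
    then obtain m where "x = \<zeta> ^ m" by blast
    have "x ^ q = \<zeta> ^ (m * q)" using \<open>x = \<zeta> ^ m\<close> by (simp only: power_mult)
    also have "m * q = q * m" by (rule mult.commute)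
    also have "\<zeta> ^ (q * m) = (\<zeta> ^ q) ^ m" by (simp only: power_mult)
    finally have "x ^ q = (\<zeta> ^ q) ^ m" .
    thus "x \<in> {z. z ^ q = 1}" using z by simp
  qed
  have "card ((\<lambda>m. \<zeta> ^ m) ` {..<q}) = q" using inj by (simp add: card_image)
  have "(\<lambda>m. \<zeta> ^ m) ` {..<q} = {z. z ^ q = 1}"
  proof (rule card_subset_eq)
    show "finite {z::complex. z ^ q = 1}" using finite_roots_unity[of q] q by simp
  qed (use sub card_roots_unity_eq[OF q] \<open>card ((\<lambda>m. \<zeta> ^ m) ` {..<q}) = q\<close> in auto)
  thus ?thesis using u by auto
qed

lemma (in autK) sunity:
  assumes q: "0 < q" and z: "\<zeta> ^ q = 1" and prim: "\<forall>k. 0 < k \<and> k < q \<longrightarrow> \<zeta> ^ k \<noteq> 1"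
    and zK: "\<zeta> \<in> K" and sz: "\<sigma> \<zeta> = inverse \<zeta>" and uK: "u \<in> K" and u: "u ^ q = 1"
  shows "\<sigma> u = inverse u"
proof -
  obtain m where "u = \<zeta> ^ m" using prim_powers[OF q z prim u] by blast
  thus ?thesis using spow[OF zK] sz by (simp add: power_inverse)
qed


lemma sig_facts:
  assumes q: "prime q" and z: "\<zeta> ^ q = 1" and prim: "\<forall>k. 0 < k \<and> k < q \<longrightarrow> \<zeta> ^ k \<noteq> 1"
    and bq: "\<forall>i\<in>{1,2,3}. b i ^ q = a i"
    and srt: "a 1 + a 2 + a 3 = of_rat r"
    and sC: "\<sigma> \<in> setC \<zeta> a b"
  obtains i j where "i \<in> {1,2,3}" "j \<in> {1,2,3}" "i \<noteq> j" "\<sigma> (b i) ^ q = a j"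
    "\<sigma> (b j) = (if b j = 0 then 0 else \<sigma> (b i) * b i / b j)"
    "\<sigma> (b (6 - i - j)) ^ q = a (6 - i - j)"
proof -
  define K where "K = Kq \<zeta> b"
  have q0: "0 < q" using q prime_gt_0_nat by blast
  have sub: "{\<zeta>, b 1, b 2, b 3} \<subseteq> K" unfolding K_def Kq_def by (rule gs_sub)
  have aut: "\<sigma> \<in> field_auts K" and sz: "\<sigma> \<zeta> = inverse \<zeta>"
    using sC unfolding setC_def K_def by auto
  interpret autK K \<sigma> using aut gs_fieldlike unfolding K_def Kq_def by unfold_locales
  from sC obtain i j where i: "i \<in> {1,2,3}" and j: "j \<in> {1,2,3}" and ij: "i \<noteq> j"
    and sai: "\<sigma> (a i) = a j" and saj: "\<sigma> (a j) = a i"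
    and ssi: "\<sigma> (\<sigma> (b i)) = b i" and ssj: "\<sigma> (\<sigma> (b j)) = b j"
    unfolding setC_def by blast
  define k where "k = 6 - i - j"
  have k: "k \<in> {1,2,3}" and ak: "a k = (a 1 + a 2 + a 3) - a i - a j"
    using i j ij unfolding k_def by auto
  have bK: "b n \<in> K" if "n \<in> {1,2,3}" for n using sub that by auto
  have ab: "a n = b n ^ q" if "n \<in> {1,2,3}" for n using bq that by auto
  have aK: "a n \<in> K" if "n \<in> {1,2,3}" for n using ab[OF that] Kpow[OF bK[OF that]] by simp
  have zK: "\<zeta> \<in> K" using sub by auto
  have r1: "\<sigma> (b i) ^ q = a j"
    using spow[OF bK[OF i], of q] ab[OF i] sai by simp
  have sak: "\<sigma> (a k) = a k"
  proof -
    have rK: "of_rat r \<in> K" and sr: "\<sigma> (of_rat r) = of_rat r" using srat by auto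
    have "\<sigma> (a k) = \<sigma> (of_rat r - a i - a j)" using ak srt by simp
    also have "\<dots> = \<sigma> (of_rat r) - \<sigma> (a i) - \<sigma> (a j)"
      using sdiff[OF Kdiff[OF rK aK[OF i]] aK[OF j]] sdiff[OF rK aK[OF i]] by simp
    also have "\<dots> = a k" using sr sai saj ak srt by simp
    finally show ?thesis .
  qed
  have r3: "\<sigma> (b k) ^ q = a k"
    using spow[OF bK[OF k], of q] ab[OF k] sak by simp
  have r2: "\<sigma> (b j) = (if b j = 0 then 0 else \<sigma> (b i) * b i / b j)"
  proof (cases "b j = 0")
    case True thus ?thesis using s0 by simp
  next
    case False
    define u where "u = \<sigma> (b i) / b j"
    have uK: "u \<in> K" unfolding u_def using Kdiv[OF sK[OF bK[OF i]] bK[OF j]] .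
    have ajnz: "a j \<noteq> 0" using ab[OF j] False by simp
    have "u ^ q = 1" unfolding u_def using r1 ab[OF j] ajnz by (simp add: power_divide)
    hence su: "\<sigma> u = inverse u" using sunity[OF q0 z prim zK sz uK] by simp
    have bi: "\<sigma> (b i) = u * b j" unfolding u_def using False by simp
    have "b i = \<sigma> u * \<sigma> (b j)" using ssi unfolding bi using smult[OF uK bK[OF j]] by simp
    hence "\<sigma> (b j) = u * b i" using su False
      by (metis (no_types, lifting) bi mult_zero_left r1 ajnz inverse_inverse_eq mult.assoc mult.commute
          mult.right_neutral right_inverse zero_power q0)
    thus ?thesis unfolding u_def using False by simp
  qed
  show ?thesis using that[OF i j ij r1 r2] r3 unfolding k_def by blast
qed


definition tri :: "(nat \<Rightarrow> complex) \<Rightarrow> complex \<times> complex \<times> complex" where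
  "tri h = (h 1, h 2, h 3)"

lemma setC_inj:
  "inj_on (\<lambda>\<sigma>. tri (\<lambda>n. \<sigma> (b n))) (setC \<zeta> a b)"
proof (rule inj_onI)
  fix \<sigma> \<tau> assume s: "\<sigma> \<in> setC \<zeta> a b" and t: "\<tau> \<in> setC \<zeta> a b"
    and e: "tri (\<lambda>n. \<sigma> (b n)) = tri (\<lambda>n. \<tau> (b n))"
  have "\<sigma> \<in> field_auts (gen_subfield {\<zeta>, b 1, b 2, b 3})" "\<sigma> \<zeta> = inverse \<zeta>"
    using s unfolding setC_def Kq_def by auto
  moreover have "\<tau> \<in> field_auts (gen_subfield {\<zeta>, b 1, b 2, b 3})" "\<tau> \<zeta> = inverse \<zeta>"
    using t unfolding setC_def Kq_def by auto
  ultimately show "\<sigma> = \<tau>" using e aut_determined[of \<sigma> "{\<zeta>, b 1, b 2, b 3}" \<tau>]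
    unfolding tri_def by auto
qed

lemma part1:
  assumes q: "prime q" and z: "\<zeta> ^ q = 1" and prim: "\<forall>k. 0 < k \<and> k < q \<longrightarrow> \<zeta> ^ k \<noteq> 1"
    and bq: "\<forall>i\<in>{1,2,3}. b i ^ q = a i"
    and srt: "a 1 + a 2 + a 3 = of_rat r"
  shows "card (setC \<zeta> a b) \<le> 9 * q ^ 2"
proof -
  have q0: "0 < q" using q prime_gt_0_nat by blast
  define F where "F i j v = (if b j = 0 then 0 else v * b i / b j)" for i j :: nat and v
  define G where "G i j v t = tri (\<lambda>n. if n = i then v else if n = j then F i j v else t)"
    for i j :: nat and v t
  define I where "I = ({1,2,3} \<times> {1,2,3} :: (nat \<times> nat) set)"
  define A where "A ij = (\<lambda>(v, t). G (fst ij) (snd ij) v t) `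
     ({v. v ^ q = a (snd ij)} \<times> {t. t ^ q = a (6 - fst ij - snd ij)})" for ij
  have fin: "finite (A ij)" and cA: "card (A ij) \<le> q ^ 2" for ij
  proof -
    have f1: "finite {v. v ^ q = a (snd ij)}" "card {v. v ^ q = a (snd ij)} \<le> q"
      using roots_finite_card[OF q0] by auto
    have f2: "finite {v. v ^ q = a (6 - fst ij - snd ij)}" "card {v. v ^ q = a (6 - fst ij - snd ij)} \<le> q"
      using roots_finite_card[OF q0] by auto
    show "finite (A ij)" unfolding A_def using f1 f2 by auto
    have "card (A ij) \<le> card ({v. v ^ q = a (snd ij)} \<times> {t. t ^ q = a (6 - fst ij - snd ij)})"
      unfolding A_def by (rule card_image_le) (use f1 f2 in auto)
    also have "\<dots> \<le> q * q" unfolding card_cartesian_product using f1 f2 by (simp add: mult_le_mono)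
    finally show "card (A ij) \<le> q ^ 2" by (simp add: power2_eq_square)
  qed
  have finI: "finite I" and cI: "card I = 9" unfolding I_def by auto
  have "(\<lambda>\<sigma>. tri (\<lambda>n. \<sigma> (b n))) ` setC \<zeta> a b \<subseteq> (\<Union>ij\<in>I. A ij)"
  proof
    fix x assume "x \<in> (\<lambda>\<sigma>. tri (\<lambda>n. \<sigma> (b n))) ` setC \<zeta> a b"
    then obtain \<sigma> where sC: "\<sigma> \<in> setC \<zeta> a b" and x: "x = tri (\<lambda>n. \<sigma> (b n))" by blast
    obtain i j where i: "i \<in> {1,2,3}" and j: "j \<in> {1,2,3}" and ij: "i \<noteq> j"
      and r1: "\<sigma> (b i) ^ q = a j"
      and r2: "\<sigma> (b j) = (if b j = 0 then 0 else \<sigma> (b i) * b i / b j)"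
      and r3: "\<sigma> (b (6 - i - j)) ^ q = a (6 - i - j)"
      using sig_facts[OF q z prim bq srt sC] by blast
    have "x = G i j (\<sigma> (b i)) (\<sigma> (b (6 - i - j)))"
      unfolding x G_def tri_def F_def using i j ij r2 by auto
    hence "x \<in> A (i, j)" unfolding A_def using r1 r3 by auto
    thus "x \<in> (\<Union>ij\<in>I. A ij)" unfolding I_def using i j by blast
  qed
  moreover have "finite (\<Union>ij\<in>I. A ij)" using finI fin by auto
  ultimately have "card (setC \<zeta> a b) \<le> card (\<Union>ij\<in>I. A ij)"
    using card_inj_on_le[OF setC_inj] by blast
  also have "\<dots> \<le> (\<Sum>ij\<in>I. card (A ij))" by (rule card_UN_le[OF finI])
  also have "\<dots> \<le> card I * q ^ 2" using sum_bounded_above[of I "\<lambda>ij. card (A ij)" "q^2"] cA by simp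
  finally show ?thesis using cI by simp
qed


lemma sig_facts2:
  assumes q: "prime q" and oq: "odd q" and z: "\<zeta> ^ q = 1" and prim: "\<forall>k. 0 < k \<and> k < q \<longrightarrow> \<zeta> ^ k \<noteq> 1"
    and bq: "\<forall>i\<in>{1,2,3}. b i ^ q = a i"
    and nm: "a 1 * a 2 * a 3 = 1 \<or> a 1 * a 2 * a 3 = -1"
    and sC: "\<sigma> \<in> setC \<zeta> a b"
  shows "\<sigma> (b 1) * \<sigma> (b 2) * \<sigma> (b 3) = inverse (b 1 * b 2 * b 3)"
    and "\<forall>n\<in>{1,2,3}. \<sigma> (b n) \<noteq> 0"
proof -
  define K where "K = Kq \<zeta> b"
  have q0: "0 < q" using q prime_gt_0_nat by blast
  have sub: "{\<zeta>, b 1, b 2, b 3} \<subseteq> K" unfolding K_def Kq_def by (rule gs_sub)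
  have aut: "\<sigma> \<in> field_auts K" and sz: "\<sigma> \<zeta> = inverse \<zeta>"
    using sC unfolding setC_def K_def by auto
  interpret autK K \<sigma> using aut gs_fieldlike unfolding K_def Kq_def by unfold_locales
  have zK: "\<zeta> \<in> K" using sub by auto
  have b1: "b 1 \<in> K" and b2: "b 2 \<in> K" and b3: "b 3 \<in> K" using sub by auto
  define w where "w = b 1 * b 2 * b 3"
  have wK: "w \<in> K" unfolding w_def using Kmult[OF Kmult[OF b1 b2] b3] .
  have wq: "w ^ q = a 1 * a 2 * a 3" unfolding w_def using bq by (simp add: power_mult_distrib)
  have sw: "\<sigma> w = inverse w"
  proof (cases "a 1 * a 2 * a 3 = 1")
    case True thus ?thesis using sunity[OF q0 z prim zK sz wK] wq by simp
  next
    case False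
    hence "w ^ q = -1" using nm wq by simp
    hence "(- w) ^ q = 1" using oq by simp
    hence "\<sigma> (- w) = inverse (- w)" using sunity[OF q0 z prim zK sz Kneg[OF wK]] by simp
    thus ?thesis using sneg[OF wK] by simp
  qed
  have "\<sigma> w = \<sigma> (b 1) * \<sigma> (b 2) * \<sigma> (b 3)"
    unfolding w_def using smult[OF Kmult[OF b1 b2] b3] smult[OF b1 b2] by simp
  thus "\<sigma> (b 1) * \<sigma> (b 2) * \<sigma> (b 3) = inverse (b 1 * b 2 * b 3)" using sw w_def by simp
  have "w \<noteq> 0" using wq nm q0 by (auto simp: zero_power)
  hence "b 1 \<noteq> 0" "b 2 \<noteq> 0" "b 3 \<noteq> 0" unfolding w_def by auto
  thus "\<forall>n\<in>{1,2,3}. \<sigma> (b n) \<noteq> 0" using snz b1 b2 b3 by auto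
qed

lemma part2:
  assumes q: "prime q" and oq: "odd q" and z: "\<zeta> ^ q = 1" and prim: "\<forall>k. 0 < k \<and> k < q \<longrightarrow> \<zeta> ^ k \<noteq> 1"
    and bq: "\<forall>i\<in>{1,2,3}. b i ^ q = a i"
    and srt: "a 1 + a 2 + a 3 = of_rat r"
    and nm: "a 1 * a 2 * a 3 = 1 \<or> a 1 * a 2 * a 3 = -1"
  shows "card (setC \<zeta> a b) \<le> 9 * q"
proof -
  have q0: "0 < q" using q prime_gt_0_nat by blast
  define w where "w = b 1 * b 2 * b 3"
  define F where "F i j v = (if b j = 0 then 0 else v * b i / b j)" for i j :: nat and v
  define G where "G i j v = tri (\<lambda>n. if n = i then v else if n = j then F i j v
      else inverse w / (v * F i j v))"
    for i j :: nat and v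
  define I where "I = ({1,2,3} \<times> {1,2,3} :: (nat \<times> nat) set)"
  define A where "A ij = (\<lambda>v. G (fst ij) (snd ij) v) ` {v. v ^ q = a (snd ij)}" for ij
  have fin: "finite (A ij)" and cA: "card (A ij) \<le> q" for ij
  proof -
    have f1: "finite {v. v ^ q = a (snd ij)}" "card {v. v ^ q = a (snd ij)} \<le> q"
      using roots_finite_card[OF q0] by auto
    show "finite (A ij)" unfolding A_def using f1 by auto
    have "card (A ij) \<le> card {v. v ^ q = a (snd ij)}"
      unfolding A_def by (rule card_image_le) (use f1 in auto)
    thus "card (A ij) \<le> q" using f1 by simp
  qed
  have finI: "finite I" and cI: "card I = 9" unfolding I_def by auto
  have "(\<lambda>\<sigma>. tri (\<lambda>n. \<sigma> (b n))) ` setC \<zeta> a b \<subseteq> (\<Union>ij\<in>I. A ij)"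
  proof
    fix x assume "x \<in> (\<lambda>\<sigma>. tri (\<lambda>n. \<sigma> (b n))) ` setC \<zeta> a b"
    then obtain \<sigma> where sC: "\<sigma> \<in> setC \<zeta> a b" and x: "x = tri (\<lambda>n. \<sigma> (b n))" by blast
    obtain i j where i: "i \<in> {1,2,3}" and j: "j \<in> {1,2,3}" and ij: "i \<noteq> j"
      and r1: "\<sigma> (b i) ^ q = a j"
      and r2: "\<sigma> (b j) = (if b j = 0 then 0 else \<sigma> (b i) * b i / b j)"
      and "\<sigma> (b (6 - i - j)) ^ q = a (6 - i - j)"
      by (rule sig_facts[OF q z prim bq srt sC])
    have p: "\<sigma> (b 1) * \<sigma> (b 2) * \<sigma> (b 3) = inverse w"
      and nz: "\<forall>n\<in>{1,2,3}. \<sigma> (b n) \<noteq> 0"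
      using sig_facts2[OF q oq z prim bq nm sC] unfolding w_def by auto
    define k where "k = 6 - i - j"
    have "\<sigma> (b i) * \<sigma> (b j) * \<sigma> (b k) = \<sigma> (b 1) * \<sigma> (b 2) * \<sigma> (b 3)"
      using i j ij unfolding k_def by (auto simp: mult_ac)
    moreover have "\<sigma> (b i) \<noteq> 0" "\<sigma> (b j) \<noteq> 0" using nz i j by auto
    ultimately have e: "\<sigma> (b k) * (\<sigma> (b i) * \<sigma> (b j)) = inverse w"
      and nzs: "\<sigma> (b i) * \<sigma> (b j) \<noteq> 0" using p by (simp_all add: mult_ac)
    have r3: "\<sigma> (b k) = inverse w / (\<sigma> (b i) * \<sigma> (b j))"
      using e nzs by (simp add: eq_divide_eq)
    have fj: "F i j (\<sigma> (b i)) = \<sigma> (b j)" unfolding F_def using r2 by simp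
    have "x = G i j (\<sigma> (b i))"
      unfolding x G_def tri_def fj using i j ij r3 unfolding k_def by auto
    hence "x \<in> A (i, j)" unfolding A_def using r1 by auto
    thus "x \<in> (\<Union>ij\<in>I. A ij)" unfolding I_def using i j by blast
  qed
  moreover have "finite (\<Union>ij\<in>I. A ij)" using finI fin by auto
  ultimately have "card (setC \<zeta> a b) \<le> card (\<Union>ij\<in>I. A ij)"
    using card_inj_on_le[OF setC_inj] by blast
  also have "\<dots> \<le> (\<Sum>ij\<in>I. card (A ij))" by (rule card_UN_le[OF finI])
  also have "\<dots> \<le> card I * q" using sum_bounded_above[of I "\<lambda>ij. card (A ij)" "q"] cA by simp
  finally show ?thesis using cI by simp
qed

lemma rat_cmod1:
  assumes "cmod (complex_of_rat c) = 1" shows "c = 1 \<or> c = -1"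
proof -
  obtain m n where c: "c = of_int m / of_int n" by (metis Fract_of_int_quotient Rat_cases)
  have "complex_of_rat c = complex_of_real (real_of_rat c)" by (simp add: c of_rat_divide)
  hence "\<bar>real_of_rat c\<bar> = 1" using assms by simp
  hence "real_of_rat \<bar>c\<bar> = 1" by (metis abs_of_rat)
  hence "\<bar>c\<bar> = 1" by simp
  thus ?thesis by (cases "c \<ge> 0") auto
qed

lemma coeffs3:
  fixes x y z :: complex
  shows "coeff ([:-x,1:] * ([:-y,1:] * [:-z,1:])) 0 = - (x * y * z)"
    and "coeff ([:-x,1:] * ([:-y,1:] * [:-z,1:])) 2 = - (x + y + z)"
  by (simp_all add: numeral_2_eq_2 algebra_simps)


theorem lemma7p1:
  fixes p :: "rat poly" and a :: "nat \<Rightarrow> complex"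
  assumes irr: "irreducible p" and deg: "degree p = 3"
    and conj: "map_poly of_rat p = (\<Prod>i\<in>{1::nat,2,3}. [:- a i, 1:])"
  shows "(\<exists>c::real. \<forall>(q::nat) (\<zeta>::complex) (b::nat \<Rightarrow> complex).
            prime q \<and> \<zeta> ^ q = 1 \<and> (\<forall>k. 0 < k \<and> k < q \<longrightarrow> \<zeta> ^ k \<noteq> 1) \<and>
            (\<forall>i\<in>{1,2,3}. b i ^ q = a i)
            \<longrightarrow> real (card (setC \<zeta> a b)) \<le> c * real q ^ 2)
       \<and> (cmod (a 1 * a 2 * a 3) = 1 \<longrightarrow>
          (\<exists>c::real. \<forall>(q::nat) (\<zeta>::complex) (b::nat \<Rightarrow> complex).
            prime q \<and> \<zeta> ^ q = 1 \<and> (\<forall>k. 0 < k \<and> k < q \<longrightarrow> \<zeta> ^ k \<noteq> 1) \<and>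
            (\<forall>i\<in>{1,2,3}. b i ^ q = a i)
            \<longrightarrow> real (card (setC \<zeta> a b)) \<le> c * real q))"
proof -
  have ceq: "coeff (map_poly of_rat p) n = (of_rat (coeff p n) :: complex)" for n
    by (simp add: coeff_map_poly)
  have pr: "(\<Prod>i\<in>{1::nat,2,3}. [:- a i, 1:]) = [:-a 1,1:] * ([:-a 2,1:] * [:-a 3,1:])" by simp
  have srt: "a 1 + a 2 + a 3 = of_rat (- coeff p 2)"
    using ceq[of 2] coeffs3(2)[of "a 1" "a 2" "a 3"] unfolding conj pr by (simp add: of_rat_minus)
  have mrt: "a 1 * a 2 * a 3 = of_rat (- coeff p 0)"
    using ceq[of 0] coeffs3(1)[of "a 1" "a 2" "a 3"] unfolding conj pr by (simp add: of_rat_minus)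
  have P1: "card (setC \<zeta> a b) \<le> 9 * q ^ 2"
    if "prime q" "\<zeta> ^ q = 1" "\<forall>k. 0 < k \<and> k < q \<longrightarrow> \<zeta> ^ k \<noteq> 1" "\<forall>i\<in>{1,2,3}. b i ^ q = a i"
    for q \<zeta> b using part1[OF that srt] .
  show ?thesis
  proof (intro conjI impI)
    show "\<exists>c::real. \<forall>(q::nat) (\<zeta>::complex) (b::nat \<Rightarrow> complex).
            prime q \<and> \<zeta> ^ q = 1 \<and> (\<forall>k. 0 < k \<and> k < q \<longrightarrow> \<zeta> ^ k \<noteq> 1) \<and>
            (\<forall>i\<in>{1,2,3}. b i ^ q = a i)
            \<longrightarrow> real (card (setC \<zeta> a b)) \<le> c * real q ^ 2"
    proof (intro exI[of _ 9] allI impI)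
      fix q :: nat and \<zeta> :: complex and b :: "nat \<Rightarrow> complex" assume h: "prime q \<and> \<zeta> ^ q = 1 \<and> (\<forall>k. 0 < k \<and> k < q \<longrightarrow> \<zeta> ^ k \<noteq> 1) \<and>
            (\<forall>i\<in>{1,2,3::nat}. b i ^ q = a i)"
      hence "card (setC \<zeta> a b) \<le> 9 * q ^ 2" using P1 by blast
      hence "real (card (setC \<zeta> a b)) \<le> real (9 * q ^ 2)" by (rule of_nat_mono)
      thus "real (card (setC \<zeta> a b)) \<le> 9 * real q ^ 2" by simp
    qed
  next
    assume cm: "cmod (a 1 * a 2 * a 3) = 1"
    have "- coeff p 0 = 1 \<or> - coeff p 0 = -1" using cm unfolding mrt by (rule rat_cmod1)
    hence nm: "a 1 * a 2 * a 3 = 1 \<or> a 1 * a 2 * a 3 = -1" unfolding mrt by auto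
    show "\<exists>c::real. \<forall>(q::nat) (\<zeta>::complex) (b::nat \<Rightarrow> complex).
            prime q \<and> \<zeta> ^ q = 1 \<and> (\<forall>k. 0 < k \<and> k < q \<longrightarrow> \<zeta> ^ k \<noteq> 1) \<and>
            (\<forall>i\<in>{1,2,3}. b i ^ q = a i)
            \<longrightarrow> real (card (setC \<zeta> a b)) \<le> c * real q"
    proof (intro exI[of _ 18] allI impI)
      fix q :: nat and \<zeta> :: complex and b :: "nat \<Rightarrow> complex" assume h: "prime q \<and> \<zeta> ^ q = 1 \<and> (\<forall>k. 0 < k \<and> k < q \<longrightarrow> \<zeta> ^ k \<noteq> 1) \<and>
            (\<forall>i\<in>{1,2,3::nat}. b i ^ q = a i)"
      have "card (setC \<zeta> a b) \<le> 18 * q"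
      proof (cases "q = 2")
        case True
        have "card (setC \<zeta> a b) \<le> 9 * q ^ 2" using P1 h by blast
        thus ?thesis using True by simp
      next
        case False
        have "q \<ge> 2" using h prime_ge_2_nat by blast
        hence "odd q" using h False prime_odd_nat by fastforce
        hence "card (setC \<zeta> a b) \<le> 9 * q" using part2[OF _ _ _ _ _ srt nm] h by blast
        thus ?thesis by simp
      qed
      hence "real (card (setC \<zeta> a b)) \<le> real (18 * q)" by (rule of_nat_mono)
      thus "real (card (setC \<zeta> a b)) \<le> 18 * real q" by simp
    qed
  qed
qed

end
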